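(* Let $M=(V,E)$ be an untangled multitree and let $\Gamma\subseteq V$ be an admissible subproblem with set of local roots $R(\Gamma)$. Let $H$ be the hypergraph with vertex set $\kappa(\Gamma)$ (the connectors of $M$ lying in $\Gamma$) and hyperedge set $\bigcup_{r\in R(\Gamma)}\mathcal{C}(r)$. Then $H$ decomposes into maximal connected components $H_1=(V_1,\mathcal{E}_1),\dots,H_t=(V_t,\mathcal{E}_t)$ such that: (i) for all $i$, $V_i\in\mathcal{E}_i$ (each maximal connected component is covered by a single one of its hyperedges); (ii) for all $i\neq j$, $V_i\cap V_j=\emptyset$; (iii) for all $r,r'\in R(\Gamma)$ and all $i\in\{1,\dots,t\}$, the families $\mathcal{C}(r)\cap\mathcal{E}_i$ and $\mathcal{C}(r')\cap\mathcal{E}_i$ form a laminar pair.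
   Context: A multitree is a finite directed acyclic graph $M=(V,E)$ such that for every vertex $v$, the subgraph induced by the vertices reachable from $v$ is an arborescence rooted at $v$. A descendant of $u$ is any vertex reachable from $u$ by a directed path (including $u$ itself). A connector is a vertex of in-degree strictly greater than $1$. For $u\in V$, the connector shadow $Sh(u)$ is the set of connectors of $M$ which are descendants of $u$. If $u$ has children $c_1,\dots,c_m$, the child shadows of $u$ is the set family $\mathcal{C}(u)=\{Sh(c_1),\dots,Sh(c_m)\}$. Two set families $\mathcal F,\mathcal F'$ on a common ground set form a laminar pair if for all $U\in\mathcal F$, $W\in\mathcal F'$, either $U\subseteq W$, $W\subseteq U$, or $U\cap W=\emptyset$. $M$ is untangled if for every pair of vertices $u,v$ such that neither is reachable from the other, $\mathcal{C}(u)$ and $\mathcal{C}(v)$ form a laminar pair. A subproblem is a subset $\Gamma\subseteq V$; $M[\Gamma]$ is the induced subgraph and the local roots $R(\Gamma)$ are the roots (in-degree-0 vertices) of $M[\Gamma]$. $\Gamma$ is child-descendant complete if for each vertex $v$ that is a child of a root of $M[\Gamma]$, every descendant of $v$ lies in $\Gamma$. $\Gamma$ is connector complete if for every connector $c$ of $M$, whenever some parent of $c$ lies in $\Gamma$, all parents of $c$ (in $M$) lie in $\Gamma$. $\Gamma$ is admissible if it is both child-descendant complete and connector complete. Maximal connected components of a hypergraph are its connected components, where two vertices are connected if linked by a chain of hyperedges consecutive ones of which intersect; $\mathcal{E}_i$ denotes the hyperedges of $H$ contained in $V_i$. *)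

theory Defs
  imports Main
begin

text \<open>A directed graph is given by a vertex set V and an edge relation E \<subseteq> V \<times> V;
  (p, c) \<in> E means p is a parent of c.\<close>

definition desc :: "('a \<times> 'a) set \<Rightarrow> 'a \<Rightarrow> 'a set" where
  "desc E u = {w. (u, w) \<in> E\<^sup>*}"

definition parents :: "('a \<times> 'a) set \<Rightarrow> 'a \<Rightarrow> 'a set" where
  "parents E c = {p. (p, c) \<in> E}"

definition children :: "('a \<times> 'a) set \<Rightarrow> 'a \<Rightarrow> 'a set" where
  "children E u = {c. (u, c) \<in> E}"

definition arborescence :: "'a set \<Rightarrow> ('a \<times> 'a) set \<Rightarrow> 'a \<Rightarrow> bool" where
  "arborescence S F r \<longleftrightarrow>
     (let F' = F \<inter> (S \<times> S) in
       r \<in> S \<and> (\<forall>w\<in>S. (r, w) \<in> F'\<^sup>*) \<and>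
       card {p. (p, r) \<in> F'} = 0 \<and> finite {p. (p, r) \<in> F'} \<and>
       (\<forall>w\<in>S - {r}. finite {p. (p, w) \<in> F'} \<and> card {p. (p, w) \<in> F'} = 1))"

definition multitree :: "'a set \<Rightarrow> ('a \<times> 'a) set \<Rightarrow> bool" where
  "multitree V E \<longleftrightarrow> finite V \<and> E \<subseteq> V \<times> V \<and> acyclic E \<and>
     (\<forall>v\<in>V. arborescence (desc E v) E v)"

definition connector :: "'a set \<Rightarrow> ('a \<times> 'a) set \<Rightarrow> 'a \<Rightarrow> bool" where
  "connector V E c \<longleftrightarrow> c \<in> V \<and> card (parents E c) > 1"

definition shadow :: "'a set \<Rightarrow> ('a \<times> 'a) set \<Rightarrow> 'a \<Rightarrow> 'a set" where
  "shadow V E u = {c \<in> desc E u. connector V E c}"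

definition child_shadows :: "'a set \<Rightarrow> ('a \<times> 'a) set \<Rightarrow> 'a \<Rightarrow> 'a set set" where
  "child_shadows V E u = shadow V E ` children E u"

definition laminar_pair :: "'a set set \<Rightarrow> 'a set set \<Rightarrow> bool" where
  "laminar_pair F F' \<longleftrightarrow> (\<forall>U\<in>F. \<forall>W\<in>F'. U \<subseteq> W \<or> W \<subseteq> U \<or> U \<inter> W = {})"

definition untangled :: "'a set \<Rightarrow> ('a \<times> 'a) set \<Rightarrow> bool" where
  "untangled V E \<longleftrightarrow> multitree V E \<and>
     (\<forall>u\<in>V. \<forall>v\<in>V. u \<notin> desc E v \<and> v \<notin> desc E u \<longrightarrow>
        laminar_pair (child_shadows V E u) (child_shadows V E v))"

definition local_roots :: "('a \<times> 'a) set \<Rightarrow> 'a set \<Rightarrow> 'a set" where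
  "local_roots E \<Gamma> = {v \<in> \<Gamma>. \<not> (\<exists>p\<in>\<Gamma>. (p, v) \<in> E)}"

definition child_desc_complete :: "('a \<times> 'a) set \<Rightarrow> 'a set \<Rightarrow> bool" where
  "child_desc_complete E \<Gamma> \<longleftrightarrow>
     (\<forall>r\<in>local_roots E \<Gamma>. \<forall>v\<in>children E r. desc E v \<subseteq> \<Gamma>)"

definition connector_complete :: "'a set \<Rightarrow> ('a \<times> 'a) set \<Rightarrow> 'a set \<Rightarrow> bool" where
  "connector_complete V E \<Gamma> \<longleftrightarrow>
     (\<forall>c. connector V E c \<longrightarrow> parents E c \<inter> \<Gamma> \<noteq> {} \<longrightarrow> parents E c \<subseteq> \<Gamma>)"

definition admissible :: "'a set \<Rightarrow> ('a \<times> 'a) set \<Rightarrow> 'a set \<Rightarrow> bool" where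
  "admissible V E \<Gamma> \<longleftrightarrow> \<Gamma> \<subseteq> V \<and> child_desc_complete E \<Gamma> \<and> connector_complete V E \<Gamma>"

definition hconnected :: "'a set set \<Rightarrow> 'a \<Rightarrow> 'a \<Rightarrow> bool" where
  "hconnected \<E> x y \<longleftrightarrow> (\<exists>es. es \<noteq> [] \<and> set es \<subseteq> \<E> \<and> x \<in> hd es \<and> y \<in> last es \<and>
     (\<forall>i. Suc i < length es \<longrightarrow> es ! i \<inter> es ! Suc i \<noteq> {}))"

definition hcomponents :: "'a set \<Rightarrow> 'a set set \<Rightarrow> 'a set set" where
  "hcomponents Vs \<E> = {{y \<in> Vs. hconnected \<E> x y} | x. x \<in> Vs \<and> hconnected \<E> x x}"

definition comp_edges :: "'a set set \<Rightarrow> 'a set \<Rightarrow> 'a set set" where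
  "comp_edges \<E> Vi = {e \<in> \<E>. e \<subseteq> Vi}"

definition connectors_in :: "'a set \<Rightarrow> ('a \<times> 'a) set \<Rightarrow> 'a set \<Rightarrow> 'a set" where
  "connectors_in V E \<Gamma> = {c \<in> \<Gamma>. connector V E c}"

definition root_hyperedges :: "'a set \<Rightarrow> ('a \<times> 'a) set \<Rightarrow> 'a set \<Rightarrow> 'a set set" where
  "root_hyperedges V E \<Gamma> = (\<Union>r\<in>local_roots E \<Gamma>. child_shadows V E r)"

end

theory Submission
  imports Defs
begin

lemma uniq_parent:
  assumes mt: "multitree V E" and rV: "r \<in> V"
    and w: "(r, w) \<in> E\<^sup>*" and wr: "w \<noteq> r"
    and p: "(p, w) \<in> E" "(r, p) \<in> E\<^sup>*"
    and q: "(q, w) \<in> E" "(r, q) \<in> E\<^sup>*"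
  shows "p = q"
proof -
  have arb: "arborescence (desc E r) E r" using mt rV unfolding multitree_def by blast
  let ?F = "E \<inter> (desc E r \<times> desc E r)"
  have "w \<in> desc E r - {r}" using w wr by (simp add: desc_def)
  with arb have "card {x. (x, w) \<in> ?F} = 1" unfolding arborescence_def Let_def by blast
  then obtain a where a: "{x. (x, w) \<in> ?F} = {a}" by (metis card_1_singletonE)
  have "p \<in> {x. (x, w) \<in> ?F}" "q \<in> {x. (x, w) \<in> ?F}"
    using p q w by (auto simp: desc_def)
  with a show ?thesis by (metis singletonD)
qed

lemma tree_unique:
  assumes mt: "multitree V E" and rV: "r \<in> V"
  shows "\<And>c1 c2. (r, c1) \<in> E \<Longrightarrow> (r, c2) \<in> E \<Longrightarrow> (c1, w) \<in> E\<^sup>* \<Longrightarrow> (c2, w) \<in> E\<^sup>* \<Longrightarrow> c1 = c2"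
proof -
  have fin: "finite E" using mt unfolding multitree_def by (meson finite_SigmaI finite_subset)
  have acy: "acyclic E" using mt unfolding multitree_def by blast
  have wfE: "wf E" by (rule finite_acyclic_wf[OF fin acy])
  show "\<And>c1 c2. (r, c1) \<in> E \<Longrightarrow> (r, c2) \<in> E \<Longrightarrow> (c1, w) \<in> E\<^sup>* \<Longrightarrow> (c2, w) \<in> E\<^sup>* \<Longrightarrow> c1 = c2"
  proof (induction w rule: wf_induct[OF wfE])
    case (1 w c1 c2)
    have noc: "\<And>x. (r, x) \<in> E \<Longrightarrow> (x, r) \<in> E\<^sup>* \<Longrightarrow> False"
      using acy unfolding acyclic_def by (meson rtrancl_into_trancl2)
    have wr: "w \<noteq> r" using noc "1.prems"(1,3) by blast
    have rw: "(r, w) \<in> E\<^sup>*" using "1.prems"(1,3) by auto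
    show ?case
    proof (cases "w = c1")
      case True
      show ?thesis
      proof (cases "w = c2")
        case True with \<open>w = c1\<close> show ?thesis by simp
      next
        case False
        then obtain p2 where p2: "(c2, p2) \<in> E\<^sup>*" "(p2, w) \<in> E"
          using "1.prems"(4) by (metis rtranclE)
        have rp2: "(r, p2) \<in> E\<^sup>*" using p2(1) "1.prems"(2) by (meson converse_rtrancl_into_rtrancl)
        have "p2 = r"
          using uniq_parent[OF mt rV rw wr p2(2) rp2, of r] "1.prems"(1) True by auto
        with noc "1.prems"(2) p2 show ?thesis by blast
      qed
    next
      case False
      then obtain p1 where p1: "(c1, p1) \<in> E\<^sup>*" "(p1, w) \<in> E"
        using "1.prems"(3) by (metis rtranclE)
      show ?thesis
      proof (cases "w = c2")
        case True
        have rp1: "(r, p1) \<in> E\<^sup>*" using p1(1) "1.prems"(1) by (meson converse_rtrancl_into_rtrancl)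
        have "p1 = r"
          using uniq_parent[OF mt rV rw wr p1(2) rp1, of r] "1.prems"(2) True by auto
        with noc "1.prems"(1) p1 show ?thesis by blast
      next
        case False
        then obtain p2 where p2: "(c2, p2) \<in> E\<^sup>*" "(p2, w) \<in> E"
          using "1.prems"(4) by (metis rtranclE)
        have rp1: "(r, p1) \<in> E\<^sup>*" using p1(1) "1.prems"(1) by (meson converse_rtrancl_into_rtrancl)
        have rp2: "(r, p2) \<in> E\<^sup>*" using p2(1) "1.prems"(2) by (meson converse_rtrancl_into_rtrancl)
        have "p1 = p2"
          using uniq_parent[OF mt rV rw wr p1(2) rp1 p2(2) rp2] .
        then show ?thesis using "1.IH" p1 p2 "1.prems"(1,2) by blast
      qed
    qed
  qed
qed

lemma roots_incomp:
  assumes cdc: "child_desc_complete E \<Gamma>"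
    and r: "r \<in> local_roots E \<Gamma>" and r': "r' \<in> local_roots E \<Gamma>" and ne: "r \<noteq> r'"
  shows "r' \<notin> desc E r"
proof
  assume "r' \<in> desc E r"
  hence "(r, r') \<in> E\<^sup>*" by (simp add: desc_def)
  then obtain c where c: "(r, c) \<in> E" "(c, r') \<in> E\<^sup>*" using ne by (metis converse_rtranclE)
  have sub: "desc E c \<subseteq> \<Gamma>" using cdc r c(1) unfolding child_desc_complete_def children_def by blast
  show False
  proof (cases "c = r'")
    case True
    thus False using r r' c(1) unfolding local_roots_def by blast
  next
    case False
    then obtain p where p: "(c, p) \<in> E\<^sup>*" "(p, r') \<in> E" using c(2) by (metis rtranclE)
    have "p \<in> \<Gamma>" using sub p(1) by (auto simp: desc_def)
    thus False using r' p(2) unfolding local_roots_def by blast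
  qed
qed

definition lam :: "'a set set \<Rightarrow> bool" where
  "lam H \<longleftrightarrow> (\<forall>e1\<in>H. \<forall>e2\<in>H. e1 \<subseteq> e2 \<or> e2 \<subseteq> e1 \<or> e1 \<inter> e2 = {})"

lemma laminar_H:
  assumes un: "untangled V E" and ad: "admissible V E \<Gamma>"
  shows "lam (root_hyperedges V E \<Gamma>)"
  unfolding lam_def
proof (intro ballI)
  fix e1 e2 assume e1: "e1 \<in> root_hyperedges V E \<Gamma>" and e2: "e2 \<in> root_hyperedges V E \<Gamma>"
  obtain r1 c1 where r1: "r1 \<in> local_roots E \<Gamma>" "c1 \<in> children E r1" "e1 = shadow V E c1"
    using e1 unfolding root_hyperedges_def child_shadows_def by blast
  obtain r2 c2 where r2: "r2 \<in> local_roots E \<Gamma>" "c2 \<in> children E r2" "e2 = shadow V E c2"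
    using e2 unfolding root_hyperedges_def child_shadows_def by blast
  have mt: "multitree V E" using un unfolding untangled_def by blast
  have GV: "\<Gamma> \<subseteq> V" using ad unfolding admissible_def by blast
  have cdc: "child_desc_complete E \<Gamma>" using ad unfolding admissible_def by blast
  have r1V: "r1 \<in> V" "r2 \<in> V" using r1(1) r2(1) GV unfolding local_roots_def by auto
  show "e1 \<subseteq> e2 \<or> e2 \<subseteq> e1 \<or> e1 \<inter> e2 = {}"
  proof (cases "r1 = r2")
    case True
    show ?thesis
    proof (cases "c1 = c2")
      case True thus ?thesis using r1 r2 by simp
    next
      case False
      have "e1 \<inter> e2 = {}"
      proof (rule ccontr)
        assume "e1 \<inter> e2 \<noteq> {}"
        then obtain w where "w \<in> desc E c1" "w \<in> desc E c2"
          using r1(3) r2(3) unfolding shadow_def by blast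
        hence "c1 = c2" using tree_unique[OF mt r1V(1), of c1 c2 w] r1(2) r2(2) True
          by (auto simp: desc_def children_def)
        thus False using False by simp
      qed
      thus ?thesis by simp
    qed
  next
    case False
    have "r1 \<notin> desc E r2" "r2 \<notin> desc E r1"
      using roots_incomp[OF cdc] r1(1) r2(1) False by metis+
    hence "laminar_pair (child_shadows V E r1) (child_shadows V E r2)"
      using un r1V unfolding untangled_def by blast
    moreover have "e1 \<in> child_shadows V E r1" "e2 \<in> child_shadows V E r2"
      using r1 r2 unfolding child_shadows_def by auto
    ultimately show ?thesis unfolding laminar_pair_def by blast
  qed
qed

lemma lam_pair: "lam H \<Longrightarrow> F \<subseteq> H \<Longrightarrow> F' \<subseteq> H \<Longrightarrow> laminar_pair F F'"
  unfolding lam_def laminar_pair_def by (simp add: subset_iff)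

lemma max_absorb:
  assumes "lam H" "M \<in> H" "\<forall>e\<in>H. M \<subseteq> e \<longrightarrow> e = M" "e \<in> H" "e \<inter> M \<noteq> {}"
  shows "e \<subseteq> M"
proof -
  have "e \<subseteq> M \<or> M \<subseteq> e \<or> e \<inter> M = {}" using assms(1,2,4) unfolding lam_def by simp
  moreover have "M \<subseteq> e \<Longrightarrow> e = M" using assms(3,4) by simp
  ultimately show ?thesis using assms(5) by auto
qed

lemma chain_in_max:
  assumes lm: "lam H" and M: "M \<in> H" and mx: "\<forall>e\<in>H. M \<subseteq> e \<longrightarrow> e = M"
    and es: "set es \<subseteq> H" "x \<in> hd es" "x \<in> M" "es \<noteq> []"
    and ch: "\<forall>i. Suc i < length es \<longrightarrow> es ! i \<inter> es ! Suc i \<noteq> {}"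
  shows "\<forall>i < length es. es ! i \<subseteq> M"
proof (intro allI impI)
  fix i assume "i < length es"
  thus "es ! i \<subseteq> M"
  proof (induction i)
    case 0
    have "es ! 0 \<in> H" using es 0 by auto
    moreover have "es ! 0 \<inter> M \<noteq> {}" using es by (auto simp: hd_conv_nth)
    ultimately show ?case using max_absorb[OF lm M mx] by blast
  next
    case (Suc i)
    have "es ! i \<subseteq> M" using Suc by auto
    moreover have "es ! i \<inter> es ! Suc i \<noteq> {}" using ch Suc.prems by blast
    moreover have "es ! Suc i \<in> H" using es Suc.prems by auto
    ultimately show ?case using max_absorb[OF lm M mx] by blast
  qed
qed

lemma comp_struct:
  assumes fin: "finite H" and lm: "lam H" and HK: "H \<subseteq> Pow K"
    and x: "hconnected H x x"
  shows "\<exists>M\<in>H. (\<forall>e\<in>H. M \<subseteq> e \<longrightarrow> e = M) \<and> {y\<in>K. hconnected H x y} = M"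
proof -
  obtain es0 where "es0 \<noteq> []" "set es0 \<subseteq> H" "x \<in> hd es0"
    using x unfolding hconnected_def by blast
  hence "hd es0 \<in> H" using hd_in_set by blast
  hence ne: "{e\<in>H. x \<in> e} \<noteq> {}" using \<open>x \<in> hd es0\<close> by blast
  have finS: "finite {e\<in>H. x \<in> e}" using fin by simp
  from finite_has_maximal[OF finS ne] obtain M where
    M: "M \<in> {e\<in>H. x \<in> e}" "\<forall>b\<in>{e\<in>H. x \<in> e}. M \<le> b \<longrightarrow> M = b" by blast
  have mx: "\<forall>e\<in>H. M \<subseteq> e \<longrightarrow> e = M" using M by auto
  have "{y\<in>K. hconnected H x y} = M"
  proof
    show "{y\<in>K. hconnected H x y} \<subseteq> M"
    proof
      fix y assume "y \<in> {y\<in>K. hconnected H x y}"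
      then obtain es where es: "es \<noteq> []" "set es \<subseteq> H" "x \<in> hd es" "y \<in> last es"
        "\<forall>i. Suc i < length es \<longrightarrow> es ! i \<inter> es ! Suc i \<noteq> {}"
        unfolding hconnected_def by blast
      have MH: "M \<in> H" and xM: "x \<in> M" using M by auto
      have all: "\<forall>i < length es. es ! i \<subseteq> M"
        by (rule chain_in_max[OF lm MH mx es(2,3) xM es(1) es(5)])
      have "length es - 1 < length es" using es(1) by simp
      hence "es ! (length es - 1) \<subseteq> M" using all by blast
      hence "last es \<subseteq> M" using es(1) by (simp add: last_conv_nth)
      thus "y \<in> M" using es(4) by blast
    qed
  next
    show "M \<subseteq> {y\<in>K. hconnected H x y}"
    proof
      fix y assume y: "y \<in> M"
      have MH: "M \<in> H" and xM: "x \<in> M" using M by auto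
      have "hconnected H x y" unfolding hconnected_def
        apply (rule exI[of _ "[M]"]) using MH xM y by simp
      moreover have "y \<in> K" using HK M y by auto
      ultimately show "y \<in> {y\<in>K. hconnected H x y}" by simp
    qed
  qed
  moreover have "M \<in> H" using M by simp
  ultimately show ?thesis using mx by blast
qed


lemma comps_char:
  assumes fin: "finite H" and lm: "lam H" and HK: "H \<subseteq> Pow K"
    and Vi: "Vi \<in> hcomponents K H"
  shows "Vi \<in> H \<and> (\<forall>e\<in>H. Vi \<subseteq> e \<longrightarrow> e = Vi)"
proof -
  obtain x where x: "x \<in> K" "hconnected H x x" "Vi = {y \<in> K. hconnected H x y}"
    using Vi unfolding hcomponents_def by blast
  from comp_struct[OF fin lm HK x(2)] obtain M where
    M: "M \<in> H" "\<forall>e\<in>H. M \<subseteq> e \<longrightarrow> e = M" "{y\<in>K. hconnected H x y} = M" by blast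
  have "Vi = M" using x(3) M(3) by simp
  thus ?thesis using M(1,2) by simp
qed

theorem lemma1:
  fixes V :: "'a set" and E :: "('a \<times> 'a) set" and \<Gamma> :: "'a set"
  assumes "untangled V E"
    and "admissible V E \<Gamma>"
  defines "Hs \<equiv> root_hyperedges V E \<Gamma>"
    and "comps \<equiv> hcomponents (connectors_in V E \<Gamma>) (root_hyperedges V E \<Gamma>)"
  shows "finite comps
    \<and> (\<forall>Vi\<in>comps. Vi \<in> comp_edges Hs Vi)
    \<and> (\<forall>Vi\<in>comps. \<forall>Vj\<in>comps. Vi \<noteq> Vj \<longrightarrow> Vi \<inter> Vj = {})
    \<and> (\<forall>r\<in>local_roots E \<Gamma>. \<forall>r'\<in>local_roots E \<Gamma>. \<forall>Vi\<in>comps.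
         laminar_pair (child_shadows V E r \<inter> comp_edges Hs Vi)
                      (child_shadows V E r' \<inter> comp_edges Hs Vi))"
proof -
  have mt: "multitree V E" using assms(1) unfolding untangled_def by blast
  have finV: "finite V" using mt unfolding multitree_def by blast
  have cdc: "child_desc_complete E \<Gamma>" using assms(2) unfolding admissible_def by blast
  let ?K = "connectors_in V E \<Gamma>"
  have lm: "lam Hs" unfolding Hs_def by (rule laminar_H[OF assms(1,2)])
  have HK: "Hs \<subseteq> Pow ?K"
  proof
    fix e assume "e \<in> Hs"
    then obtain r c where rc: "r \<in> local_roots E \<Gamma>" "c \<in> children E r" "e = shadow V E c"
      unfolding Hs_def root_hyperedges_def child_shadows_def by blast
    have "desc E c \<subseteq> \<Gamma>" using cdc rc unfolding child_desc_complete_def by blast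
    thus "e \<in> Pow ?K" using rc(3) unfolding shadow_def connectors_in_def by auto
  qed
  have KV: "?K \<subseteq> V" unfolding connectors_in_def connector_def by auto
  have finH: "finite Hs" using HK KV finV by (meson Pow_mono finite_Pow_iff finite_subset)
  have cc: "\<And>Vi. Vi \<in> comps \<Longrightarrow> Vi \<in> Hs \<and> (\<forall>e\<in>Hs. Vi \<subseteq> e \<longrightarrow> e = Vi)"
    using comps_char[OF finH lm HK] unfolding comps_def Hs_def by blast
  have c1: "finite comps" using cc finH by (meson finite_subset subsetI)
  have c2: "\<forall>Vi\<in>comps. Vi \<in> comp_edges Hs Vi" using cc unfolding comp_edges_def by blast
  have c3: "\<forall>Vi\<in>comps. \<forall>Vj\<in>comps. Vi \<noteq> Vj \<longrightarrow> Vi \<inter> Vj = {}"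
  proof (intro ballI impI)
    fix Vi Vj assume a: "Vi \<in> comps" "Vj \<in> comps" "Vi \<noteq> Vj"
    have i: "Vi \<in> Hs" "\<forall>e\<in>Hs. Vi \<subseteq> e \<longrightarrow> e = Vi" using cc[OF a(1)] by auto
    have j: "Vj \<in> Hs" "\<forall>e\<in>Hs. Vj \<subseteq> e \<longrightarrow> e = Vj" using cc[OF a(2)] by auto
    have "Vi \<subseteq> Vj \<or> Vj \<subseteq> Vi \<or> Vi \<inter> Vj = {}" using lm i(1) j(1) unfolding lam_def by blast
    moreover have "\<not> Vi \<subseteq> Vj" using i(2) j(1) a(3) by blast
    moreover have "\<not> Vj \<subseteq> Vi" using j(2) i(1) a(3) by blast
    ultimately show "Vi \<inter> Vj = {}" by blast
  qed
  have c4: "\<forall>r\<in>local_roots E \<Gamma>. \<forall>r'\<in>local_roots E \<Gamma>. \<forall>Vi\<in>comps.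
         laminar_pair (child_shadows V E r \<inter> comp_edges Hs Vi)
                      (child_shadows V E r' \<inter> comp_edges Hs Vi)"
  proof (intro ballI)
    fix r r' Vi
    have s1: "child_shadows V E r \<inter> comp_edges Hs Vi \<subseteq> Hs" unfolding comp_edges_def by blast
    have s2: "child_shadows V E r' \<inter> comp_edges Hs Vi \<subseteq> Hs" unfolding comp_edges_def by blast
    show "laminar_pair (child_shadows V E r \<inter> comp_edges Hs Vi) (child_shadows V E r' \<inter> comp_edges Hs Vi)"
      by (rule lam_pair[OF lm s1 s2])
  qed
  show ?thesis using c1 c2 c3 c4 by blast
qed

end
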